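(* For every $n\in\mathbb N$, the family of maps $\pi^n_X:\mathbb{T}_n(\mathbb{T}_{n+1}^-(X))\to\mathbb{T}_{n+1}(X)$, indexed by partial orders $X$, is a natural isomorphism $\pi^n:\mathbb{T}_n\circ\mathbb{T}_{n+1}^-\Rightarrow\mathbb{T}_{n+1}$; i.e. each $\pi^n_X$ is an isomorphism of partial orders and $\pi^n_Y\circ\mathbb{T}_n(\mathbb{T}_{n+1}^-(f))=\mathbb{T}_{n+1}(f)\circ\pi^n_X$ for every quasi embedding $f:X\to Y$.
   Context: A quasi embedding between partial orders is a function $f$ with $f(x)\leq f(y)\Rightarrow x\leq y$. For a partial order $X$, $M(X)$ is the set of finite multisets $[x_0,\dots,x_{m-1}]$ with elements from $X$, ordered by $[x_0,\dots,x_{m-1}]\leq_{M(X)}[y_0,\dots,y_{k-1}]$ iff there is an injection $g$ with $x_i\leq_X y_{g(i)}$ for all $i<m$. For $n\in\mathbb N$ and a partial order $X$, $\mathbb{T}_n(X)$ is generated by: $\overline x$ for each $x\in X$; $i\star\sigma$ for each $\sigma=[t_0,\dots,t_{m-1}]\in M(\mathbb{T}_n(X))$ and $i<n$. For $n>0$, $\mathbb{T}_n^-(X)=\{\overline x\mid x\in X\}\cup\{0\star\sigma\mid\sigma\in M(\mathbb{T}_n(X))\}\subseteq\mathbb{T}_n(X)$. The partial order $\leq_{\mathbb{T}_n(X)}$ is defined recursively: $\overline x\leq t$ iff either $t=\overline y$ with $x\leq_X y$, or $t=j\star[t_0,\dots,t_{m-1}]$ and $\overline x\leq t_l$ for some $l<m$;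 $i\star\sigma\leq t$ iff either $t=i\star\tau$ with $\sigma\leq_{M(\mathbb{T}_n(X))}\tau$, or $t=j\star[t_0,\dots,t_{m-1}]$ with $j\geq i$ and $i\star\sigma\leq t_l$ for some $l<m$; $\leq_{\mathbb{T}_n^-(X)}$ is its restriction. For a quasi embedding $f:X\to Y$, $\mathbb{T}_n(f)(\overline x)=\overline{f(x)}$, $\mathbb{T}_n(f)(i\star[t_0,\dots,t_{m-1}])=i\star[\mathbb{T}_n(f)(t_0),\dots,\mathbb{T}_n(f)(t_{m-1})]$, and $\mathbb{T}_n^-(f)$ is its restriction to $\mathbb{T}_n^-(X)$. Thus $\mathbb{T}_n(\mathbb{T}_{n+1}^-(X))$ consists of terms built from $\overline t$ ($t\in\mathbb{T}_{n+1}^-(X)$) with labels $i<n$. Define $\pi^n_X$ recursively by $\pi^n_X(\overline t)=t$ (using $\mathbb{T}_{n+1}^-(X)\subseteq\mathbb{T}_{n+1}(X)$) and $\pi^n_X(i\star[s_0,\dots,s_{m-1}])=(i+1)\star[\pi^n_X(s_0),\dots,\pi^n_X(s_{m-1})]$. *)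

theory Defs
  imports "HOL-Library.Multiset"
begin

definition po :: "'a set \<Rightarrow> ('a \<Rightarrow> 'a \<Rightarrow> bool) \<Rightarrow> bool" where
  "po A r \<longleftrightarrow> (\<forall>x\<in>A. r x x)
     \<and> (\<forall>x\<in>A. \<forall>y\<in>A. r x y \<and> r y x \<longrightarrow> x = y)
     \<and> (\<forall>x\<in>A. \<forall>y\<in>A. \<forall>z\<in>A. r x y \<and> r y z \<longrightarrow> r x z)"

definition qemb :: "'a set \<Rightarrow> ('a \<Rightarrow> 'a \<Rightarrow> bool) \<Rightarrow> 'b set \<Rightarrow> ('b \<Rightarrow> 'b \<Rightarrow> bool)
    \<Rightarrow> ('a \<Rightarrow> 'b) \<Rightarrow> bool" where
  "qemb A r B s f \<longleftrightarrow> f ` A \<subseteq> B \<and> (\<forall>x\<in>A. \<forall>y\<in>A. s (f x) (f y) \<longrightarrow> r x y)"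

definition ord_iso :: "'a set \<Rightarrow> ('a \<Rightarrow> 'a \<Rightarrow> bool) \<Rightarrow> 'b set \<Rightarrow> ('b \<Rightarrow> 'b \<Rightarrow> bool)
    \<Rightarrow> ('a \<Rightarrow> 'b) \<Rightarrow> bool" where
  "ord_iso A r B s f \<longleftrightarrow> bij_betw f A B \<and> (\<forall>x\<in>A. \<forall>y\<in>A. r x y \<longleftrightarrow> s (f x) (f y))"

definition mle :: "('a \<Rightarrow> 'b \<Rightarrow> bool) \<Rightarrow> 'a multiset \<Rightarrow> 'b multiset \<Rightarrow> bool" where
  "mle R M N \<longleftrightarrow> (\<exists>xs ys g. M = mset xs \<and> N = mset ys
      \<and> inj_on g {..<length xs} \<and> g ` {..<length xs} \<subseteq> {..<length ys}
      \<and> (\<forall>i<length xs. R (xs ! i) (ys ! g i)))"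

lemma mle_mono[mono]: "(\<And>x y. R x y \<longrightarrow> S x y) \<Longrightarrow> mle R M N \<longrightarrow> mle S M N"
  unfolding mle_def by (intro impI, elim exE conjE, intro exI conjI) auto

text \<open>Terms: leaves \<open>Lf x\<close> (= overline x) and nodes \<open>Nd i \<sigma>\<close> (= i \<star> \<sigma>).\<close>
datatype (plugins only: size) (labs: 'l, leaves: 'a) tm = Lf 'a | Nd 'l "('l, 'a) tm multiset"

text \<open>The carrier of T_n(X) for X with carrier A.\<close>
definition tms :: "nat \<Rightarrow> 'a set \<Rightarrow> (nat, 'a) tm set" where
  "tms n A = {t. labs t \<subseteq> {..<n} \<and> leaves t \<subseteq> A}"

text \<open>The carrier of T_n^-(X) (for n > 0).\<close>
definition tmsm :: "nat \<Rightarrow> 'a set \<Rightarrow> (nat, 'a) tm set" where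
  "tmsm n A = {t \<in> tms n A. case t of Lf x \<Rightarrow> True | Nd i \<sigma> \<Rightarrow> i = 0}"

text \<open>The order on T_n(X), given the order r of X (restricted to carriers when used).\<close>
inductive tm_le :: "('a \<Rightarrow> 'a \<Rightarrow> bool) \<Rightarrow> (nat, 'a) tm \<Rightarrow> (nat, 'a) tm \<Rightarrow> bool"
  for r :: "'a \<Rightarrow> 'a \<Rightarrow> bool" where
  lf_lf: "r x y \<Longrightarrow> tm_le r (Lf x) (Lf y)"
| lf_nd: "t \<in># T \<Longrightarrow> tm_le r (Lf x) t \<Longrightarrow> tm_le r (Lf x) (Nd j T)"
| nd_nd: "mle (tm_le r) S T \<Longrightarrow> tm_le r (Nd i S) (Nd i T)"
| nd_sub: "i \<le> j \<Longrightarrow> t \<in># T \<Longrightarrow> tm_le r (Nd i S) t \<Longrightarrow> tm_le r (Nd i S) (Nd j T)"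

primrec pi :: "(nat, (nat, 'a) tm) tm \<Rightarrow> (nat, 'a) tm" where
  "pi (Lf t) = t"
| "pi (Nd i M) = Nd (Suc i) (image_mset pi M)"

end

theory Submission
  imports Defs
begin

lemma image_mset_eq_mset:
  "image_mset f S = mset xs' \<Longrightarrow> \<exists>xs. mset xs = S \<and> map f xs = xs'"
proof (induction xs' arbitrary: S)
  case Nil then show ?case by simp
next
  case (Cons a xs')
  have "a \<in># image_mset f S" using Cons.prems by simp
  then obtain x where x: "x \<in># S" "a = f x" by auto
  have "image_mset f (S - {#x#}) = mset xs'"
    using Cons.prems x by (simp add: image_mset_Diff)
  from Cons.IH[OF this] obtain xs where "mset xs = S - {#x#}" "map f xs = xs'" by blast
  then show ?case using x by (intro exI[of _ "x # xs"]) auto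
qed

lemma mle_mono_in:
  assumes "mle R S T" "\<And>x y. x \<in># S \<Longrightarrow> y \<in># T \<Longrightarrow> R x y \<Longrightarrow> R' x y"
  shows "mle R' S T"
proof -
  from assms(1) obtain xs ys g where h: "S = mset xs" "T = mset ys"
    "inj_on g {..<length xs}" "g ` {..<length xs} \<subseteq> {..<length ys}"
    "\<forall>i<length xs. R (xs ! i) (ys ! g i)" unfolding mle_def by blast
  have "\<forall>i<length xs. R' (xs ! i) (ys ! g i)"
  proof (intro allI impI)
    fix i assume i: "i < length xs"
    then have "g i < length ys" using h(4) by auto
    then show "R' (xs ! i) (ys ! g i)" using assms(2) h i by auto
  qed
  then show ?thesis unfolding mle_def using h by blast
qed

lemma mle_image:
  assumes "mle (\<lambda>x y. R (f x) (g y)) S T"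
  shows "mle R (image_mset f S) (image_mset g T)"
proof -
  from assms obtain xs ys h where h: "S = mset xs" "T = mset ys"
    "inj_on h {..<length xs}" "h ` {..<length xs} \<subseteq> {..<length ys}"
    "\<forall>i<length xs. R (f (xs ! i)) (g (ys ! h i))" unfolding mle_def by blast
  show ?thesis unfolding mle_def
    apply (rule exI[of _ "map f xs"], rule exI[of _ "map g ys"], rule exI[of _ h])
    using h by auto
qed

lemma mle_image_rev:
  assumes "mle R (image_mset f S) (image_mset g T)"
  shows "mle (\<lambda>x y. R (f x) (g y)) S T"
proof -
  from assms obtain xs' ys' h where h: "image_mset f S = mset xs'" "image_mset g T = mset ys'"
    "inj_on h {..<length xs'}" "h ` {..<length xs'} \<subseteq> {..<length ys'}"
    "\<forall>i<length xs'. R (xs' ! i) (ys' ! h i)" unfolding mle_def by blast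
  obtain xs where xs: "mset xs = S" "map f xs = xs'" using image_mset_eq_mset[OF h(1)] by blast
  obtain ys where ys: "mset ys = T" "map g ys = ys'" using image_mset_eq_mset[OF h(2)] by blast
  have "\<forall>i<length xs. R (f (xs ! i)) (g (ys ! h i))"
  proof (intro allI impI)
    fix i assume i: "i < length xs"
    then have "i \<in> {..<length xs'}" using xs by auto
    then have "h i \<in> {..<length ys'}" using h(4) by blast
    then have "h i < length ys" using ys by auto
    then show "R (f (xs ! i)) (g (ys ! h i))" using h(5) i xs ys by auto
  qed
  then show ?thesis unfolding mle_def using h xs ys
    by (intro exI[of _ xs] exI[of _ ys] exI[of _ h]) (auto simp: image_subset_iff)
qed

lemma mset_inj:
  "(\<forall>x\<in>#M. \<forall>y\<in>#N. f x = f y \<longrightarrow> x = y) \<Longrightarrow> image_mset f M = image_mset f N \<Longrightarrow> M = N"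
proof (induction M arbitrary: N)
  case empty then show ?case by simp
next
  case (add x M)
  have "f x \<in># image_mset f N" using add.prems(2)[symmetric] by simp
  then obtain y where y: "y \<in># N" "f x = f y" by auto
  then have xy: "x = y" using add.prems(1) by auto
  have N: "N = add_mset x (N - {#x#})" using y xy by simp
  have "image_mset f M = image_mset f (N - {#x#})"
    using add.prems(2) N by (metis image_mset_add_mset add_mset_remove_trivial)
  moreover have "\<forall>a\<in>#M. \<forall>b\<in>#N - {#x#}. f a = f b \<longrightarrow> a = b"
    using add.prems(1) by (auto dest: in_diffD)
  ultimately have "M = N - {#x#}" using add.IH by blast
  then show ?case using N by simp
qed

definition good :: "(nat, 'a) tm \<Rightarrow> bool" where
  "good u = (case u of Lf _ \<Rightarrow> True | Nd i _ \<Rightarrow> i = 0)"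

lemma natural: "pi (map_tm id (map_tm id f) t) = map_tm id f (pi t)"
  by (induction t) (auto simp: tm.map multiset.map_comp intro!: image_mset_cong)

lemma pi_fwd:
  "tm_le (tm_le r) s t \<Longrightarrow> \<forall>u\<in>leaves s. good u \<Longrightarrow> tm_le r (pi s) (pi t)"
proof (induction rule: tm_le.induct)
  case (lf_lf x y) then show ?case by simp
next
  case (lf_nd t T x j)
  show ?case
  proof (cases x)
    case (Lf a)
    then show ?thesis using lf_nd by (auto intro!: tm_le.lf_nd[where t="pi t"])
  next
    case (Nd k \<sigma>)
    then have "k = 0" using lf_nd.prems by (simp add: good_def)
    then show ?thesis using lf_nd Nd by (auto intro!: tm_le.nd_sub[where t="pi t"])
  qed
next
  case (nd_nd S T i)
  have "mle (\<lambda>x y. tm_le r (pi x) (pi y)) S T"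
    by (rule mle_mono_in[OF nd_nd.IH]) (use nd_nd.prems in auto)
  then show ?case by (auto intro!: tm_le.nd_nd mle_image)
next
  case (nd_sub i j t T S)
  then show ?case by (auto intro!: tm_le.nd_sub[where t="pi t"])
qed

lemma pi_Lf_inv: "pi s = Lf x \<Longrightarrow> s = Lf (Lf x)"
  by (cases s) auto


abbreviation G :: "(nat, (nat, 'a) tm) tm \<Rightarrow> bool" where
  "G s \<equiv> \<forall>u\<in>leaves s. good u"

lemma pi_bwd:
  "tm_le r a b \<Longrightarrow> \<forall>s t. pi s = a \<longrightarrow> pi t = b \<longrightarrow> G s \<longrightarrow> G t \<longrightarrow> tm_le (tm_le r) s t"
proof (induction rule: tm_le.induct)
  case (lf_lf x y)
  show ?case
  proof (intro allI impI)
    fix s t :: "(nat, (nat, 'a) tm) tm"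
    assume "pi s = Lf x" "pi t = Lf y"
    then have "s = Lf (Lf x)" "t = Lf (Lf y)" by (auto dest: pi_Lf_inv)
    then show "tm_le (tm_le r) s t" using lf_lf by (auto intro: tm_le.lf_lf)
  qed
next
  case (lf_nd u T x j)
  show ?case
  proof (intro allI impI)
    fix s t :: "(nat, (nat, 'a) tm) tm"
    assume a: "pi s = Lf x" "pi t = Nd j T" "G s" "G t"
    then have s: "s = Lf (Lf x)" by (auto dest: pi_Lf_inv)
    show "tm_le (tm_le r) s t"
    proof (cases t)
      case (Lf w)
      then show ?thesis using s a lf_nd by (auto intro!: tm_le.lf_lf tm_le.lf_nd)
    next
      case (Nd j' M)
      then have "u \<in># image_mset pi M" using a lf_nd by auto
      then obtain v where v: "v \<in># M" "u = pi v" by auto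
      have "G v" using a(4) Nd v by auto
      then have "tm_le (tm_le r) s v" using lf_nd.IH a s v by auto
      then show ?thesis using Nd v s by (auto intro: tm_le.lf_nd)
    qed
  qed
next
  case (nd_nd S T i)
  show ?case
  proof (intro allI impI)
    fix s t :: "(nat, (nat, 'a) tm) tm"
    assume a: "pi s = Nd i S" "pi t = Nd i T" "G s" "G t"
    show "tm_le (tm_le r) s t"
    proof (cases s)
      case (Lf v)
      then have v: "v = Nd i S" using a by simp
      then have i0: "i = 0" using a(3) Lf by (simp add: good_def)
      show ?thesis
      proof (cases t)
        case (Lf w)
        then have "w = Nd i T" using a by simp
        moreover have "mle (tm_le r) S T" by (rule mle_mono_in[OF nd_nd.IH]) auto
        ultimately show ?thesis using v \<open>s = Lf v\<close> Lf by (auto intro!: tm_le.lf_lf tm_le.nd_nd)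
      next
        case (Nd j M)
        then show ?thesis using a i0 by simp
      qed
    next
      case (Nd i' S')
      then have S: "i = Suc i'" "S = image_mset pi S'" using a by auto
      show ?thesis
      proof (cases t)
        case (Lf w)
        then have "w = Nd i T" using a by simp
        then show ?thesis using a(4) Lf S by (simp add: good_def)
      next
        case (Nd j' T')
        then have T: "j' = i'" "T = image_mset pi T'" using a S by auto
        have "mle (\<lambda>x y. tm_le r (pi x) (pi y) \<and>
                 (\<forall>s t. pi s = pi x \<longrightarrow> pi t = pi y \<longrightarrow> G s \<longrightarrow> G t \<longrightarrow> tm_le (tm_le r) s t)) S' T'"
          by (rule mle_image_rev) (use nd_nd.IH S T in simp)
        then have "mle (tm_le (tm_le r)) S' T'"
        proof (rule mle_mono_in)
          fix x y assume "x \<in># S'" "y \<in># T'"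
            "tm_le r (pi x) (pi y) \<and>
                 (\<forall>s t. pi s = pi x \<longrightarrow> pi t = pi y \<longrightarrow> G s \<longrightarrow> G t \<longrightarrow> tm_le (tm_le r) s t)"
          moreover have "G x" "G y" using \<open>x \<in># S'\<close> \<open>y \<in># T'\<close> a(3,4) Nd \<open>s = Nd i' S'\<close> by auto
          ultimately show "tm_le (tm_le r) x y" by blast
        qed
        then show ?thesis using Nd \<open>s = Nd i' S'\<close> T by (auto intro: tm_le.nd_nd)
      qed
    qed
  qed
next
  case (nd_sub i j u T S)
  show ?case
  proof (intro allI impI)
    fix s t :: "(nat, (nat, 'a) tm) tm"
    assume a: "pi s = Nd i S" "pi t = Nd j T" "G s" "G t"
    show "tm_le (tm_le r) s t"
    proof (cases t)
      case (Lf w)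
      then have w: "w = Nd j T" using a by simp
      then have "j = 0" using a(4) Lf by (simp add: good_def)
      then have "i = 0" using nd_sub by simp
      have "s = Lf (Nd i S)" using a(1) \<open>i = 0\<close> by (cases s) auto
      then show ?thesis using Lf w nd_sub by (auto intro!: tm_le.lf_lf intro: tm_le.nd_sub)
    next
      case (Nd j' M)
      then have j: "j = Suc j'" "T = image_mset pi M" using a by auto
      then have "u \<in># image_mset pi M" using nd_sub by auto
      then obtain v where v: "v \<in># M" "u = pi v" by auto
      have "G v" using a(4) Nd v by auto
      then have sv: "tm_le (tm_le r) s v" using nd_sub.IH a v by auto
      show ?thesis
      proof (cases s)
        case (Lf x)
        then show ?thesis using sv Nd v by (auto intro: tm_le.lf_nd)
      next
        case (Nd i' S')
        then have "i = Suc i'" using a by auto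
        then have "i' \<le> j'" using nd_sub j by simp
        then show ?thesis using sv Nd \<open>t = Nd j' M\<close> v by (auto intro: tm_le.nd_sub)
      qed
    qed
  qed
qed

lemma pi_labs: "labs (pi t) \<subseteq> Suc ` labs t \<union> \<Union>(labs ` leaves t)"
  by (induction t) fastforce+

lemma pi_leaves: "leaves (pi t) = \<Union>(leaves ` leaves t)"
  by (induction t) auto

lemma pi_into: "t \<in> tms n (tmsm (Suc n) A) \<Longrightarrow> pi t \<in> tms (Suc n) A"
  using pi_labs[of t] pi_leaves[of t] unfolding tms_def tmsm_def by fastforce

lemma dom_G: "t \<in> tms n (tmsm (Suc n) A) \<Longrightarrow> G t"
  unfolding tms_def tmsm_def good_def by auto

lemma pi_inj: "pi s = pi t \<Longrightarrow> G s \<Longrightarrow> G t \<Longrightarrow> s = t"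
proof (induction s arbitrary: t)
  case (Lf x)
  then show ?case by (cases t) (auto simp: good_def)
next
  case (Nd i M)
  show ?case
  proof (cases t)
    case (Lf y)
    then show ?thesis using Nd.prems by (auto simp: good_def)
  next
    case (Nd j N)
    then have "i = j" "image_mset pi M = image_mset pi N" using Nd.prems by auto
    moreover have "M = N"
      by (rule mset_inj[OF _ \<open>image_mset pi M = image_mset pi N\<close>])
         (use Nd.IH Nd.prems \<open>t = Nd j N\<close> in auto)
    ultimately show ?thesis using Nd by simp
  qed
qed

lemma pi_surj: "t \<in> tms (Suc n) A \<Longrightarrow> \<exists>s \<in> tms n (tmsm (Suc n) A). pi s = t"
proof (induction t)
  case (Lf x)
  then show ?case by (intro bexI[of _ "Lf (Lf x)"]) (auto simp: tms_def tmsm_def)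
next
  case (Nd i M)
  show ?case
  proof (cases i)
    case 0
    then show ?thesis using Nd.prems by (intro bexI[of _ "Lf (Nd i M)"]) (auto simp: tms_def tmsm_def)
  next
    case (Suc k)
    have "\<forall>x\<in>#M. \<exists>s \<in> tms n (tmsm (Suc n) A). pi s = x"
    proof
      fix x assume x: "x \<in># M"
      then have "x \<in> tms (Suc n) A" using Nd.prems by (auto simp: tms_def)
      then show "\<exists>s \<in> tms n (tmsm (Suc n) A). pi s = x" using Nd.IH x by blast
    qed
    then obtain g where g: "\<And>x. x \<in># M \<Longrightarrow> g x \<in> tms n (tmsm (Suc n) A) \<and> pi (g x) = x"
      by metis
    have "image_mset pi (image_mset g M) = M"
      using g by (simp add: multiset.map_comp cong: image_mset_cong)
    moreover have "k < n" using Nd.prems Suc by (auto simp: tms_def)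
    moreover have "Nd k (image_mset g M) \<in> tms n (tmsm (Suc n) A)"
      using g \<open>k < n\<close> by (fastforce simp: tms_def)
    ultimately show ?thesis using Suc by (intro bexI[of _ "Nd k (image_mset g M)"]) auto
  qed
qed

theorem proposition6p2:
  fixes n :: nat
  shows "(\<forall>(A :: 'a set) r. po A r \<longrightarrow>
            ord_iso (tms n (tmsm (Suc n) A)) (tm_le (tm_le r)) (tms (Suc n) A) (tm_le r) pi)
       \<and> (\<forall>(A :: 'a set) r (B :: 'b set) s f. po A r \<longrightarrow> po B s \<longrightarrow> qemb A r B s f \<longrightarrow>
            (\<forall>t \<in> tms n (tmsm (Suc n) A).
               pi (map_tm id (map_tm id f) t) = map_tm id f (pi t)))"
proof (intro conjI allI impI ballI)
  fix A :: "'a set" and r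
  have inj: "inj_on pi (tms n (tmsm (Suc n) A))"
    by (rule inj_onI) (use pi_inj dom_G in blast)
  have img: "pi ` tms n (tmsm (Suc n) A) = tms (Suc n) A"
    using pi_into pi_surj by blast
  have ord: "\<forall>x\<in>tms n (tmsm (Suc n) A). \<forall>y\<in>tms n (tmsm (Suc n) A).
      tm_le (tm_le r) x y \<longleftrightarrow> tm_le r (pi x) (pi y)"
    using pi_fwd pi_bwd dom_G by blast
  show "ord_iso (tms n (tmsm (Suc n) A)) (tm_le (tm_le r)) (tms (Suc n) A) (tm_le r) pi"
    unfolding ord_iso_def bij_betw_def using inj img ord by blast
next
  fix f :: "'a \<Rightarrow> 'b" and t :: "(nat, (nat, 'a) tm) tm"
  show "pi (map_tm id (map_tm id f) t) = map_tm id f (pi t)" by (rule natural)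
qed

end
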